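(* Let $p$ be a prime and $k,\ell$ integers with $k>0$, $\ell\ge0$; put $q=p^k$ and $Q=p^{\ell}$. Let $\Gamma$ be the set of roots in $\mathbb{F}_{q^3}$ of $X^{q^2}+X^q+X$. Then the polynomial $(X^q-X)\circ X^{Q+1}=X^{q(Q+1)}-X^{Q+1}$ permutes $\Gamma$ (i.e. maps $\Gamma$ bijectively onto $\Gamma$) if and only if $\gcd(q-1,Q+1)=1$, or equivalently, if and only if $p=2$ and $\operatorname{ord}_2(k)\le\operatorname{ord}_2(\ell)$.
   Context: For a nonzero integer $N$, $\operatorname{ord}_2(N)$ is the largest integer $s\ge0$ with $2^s\mid N$, and $\operatorname{ord}_2(0)=\infty$. *)

theory Defs
  imports "HOL-Computational_Algebra.Primes" "HOL-Library.Extended_Nat"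
begin

definition ord2 :: "int \<Rightarrow> enat" where
  "ord2 N = (if N = 0 then \<infinity> else enat (multiplicity 2 N))"

end

theory Submission
  imports Defs "HOL-Number_Theory.Number_Theory" "HOL-Computational_Algebra.Polynomial"
begin


lemma ff_power_card:
  fixes x :: "'a :: {field,finite}"
  shows "x ^ card (UNIV :: 'a set) = x"
proof (cases "x = 0")
  case False
  have "x * (\<Prod>y\<in>UNIV-{0}. x * y) = x * x ^ (card (UNIV :: 'a set) - 1) * \<Prod>(UNIV-{0})"
    by (simp add: prod.distrib mult_ac)
  also have "x * x ^ (card (UNIV :: 'a set) - 1) = x ^ Suc (card (UNIV :: 'a set) - 1)"
    by (subst power_Suc) auto
  also have "Suc (card (UNIV :: 'a set) - 1) = card (UNIV :: 'a set)"
    using finite_UNIV_card_ge_0[where ?'a = 'a] by simp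
  also have "(\<Prod>y\<in>UNIV-{0}. x * y) = (\<Prod>y\<in>UNIV-{0}. y)"
    by (rule prod.reindex_bij_witness[of _ "\<lambda>y. y / x" "\<lambda>y. x * y"]) (use False in auto)
  finally show ?thesis
    by simp
qed (use finite_UNIV_card_ge_0[where ?'a = 'a] in auto)

lemma ff_CHAR:
  assumes "prime p" "card (UNIV :: 'a::{field,finite} set) = p ^ n"
  shows "CHAR('a) = p"
proof -
  have pos: "CHAR('a) > 0" by (rule finite_imp_CHAR_pos) simp
  have pr: "prime CHAR('a)" using prime_CHAR_semidom[OF pos] .
  have "CHAR('a) dvd p ^ n" using CHAR_dvd_CARD[where 'a='a] assms(2) by simp
  then have "CHAR('a) dvd p" using pr prime_dvd_power by blast
  then show ?thesis using pr assms(1) by (simp add: primes_dvd_imp_eq)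
qed

lemma roots_bound:
  fixes c :: "'a::field"
  assumes "n > 0"
  shows "card {x. x ^ n = c} \<le> n"
proof -
  define P where "P = monom (1::'a) n - [:c:]"
  have dm: "degree (monom (1::'a) n) = n" by (simp add: degree_monom_eq)
  have dP: "degree P = n" unfolding P_def using assms dm
    by (metis degree_add_eq_left degree_pCons_0 diff_conv_add_uminus degree_minus pCons_0_0 pCons_eq_0_iff)
  have "P \<noteq> 0" using dP assms by auto
  moreover have "{x. x ^ n = c} = {x. poly P x = 0}" by (auto simp: P_def poly_monom)
  ultimately show ?thesis using card_poly_roots_bound[of P] dP by simp
qed

lemma frob_add:
  fixes a b :: "'a::field"
  assumes "CHAR('a) = p" "prime p"
  shows "(a + b) ^ (p ^ n) = a ^ (p ^ n) + b ^ (p ^ n)"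
  using freshmans_dream'[of "p^n" n a b] assms by simp

lemma frob_diff:
  fixes a b :: "'a::field"
  assumes "CHAR('a) = p" "prime p"
  shows "(a - b) ^ (p ^ n) = a ^ (p ^ n) - b ^ (p ^ n)"
proof -
  have "a ^ (p ^ n) = ((a - b) + b) ^ (p ^ n)" by simp
  also have "\<dots> = (a - b) ^ (p ^ n) + b ^ (p ^ n)" by (rule frob_add[OF assms])
  finally show ?thesis by simp
qed

lemma char2_two:
  assumes "CHAR('a::field) = 2"
  shows "(2::'a) = 0"
  using of_nat_CHAR[where 'a='a] assms by simp

lemma char2_neg:
  fixes a :: "'a::field"
  assumes "CHAR('a) = 2"
  shows "- a = a"
proof -
  have "a + a = 2 * a" by simp
  then have "a + a = 0" using char2_two[OF assms] by simp
  then show ?thesis by (simp add: add_eq_0_iff2 eq_neg_iff_add_eq_0)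
qed

lemma char2_sq_inj:
  fixes a b :: "'a::field"
  assumes "CHAR('a) = 2" "a ^ 2 = b ^ 2"
  shows "a = b"
proof -
  have "(a - b) ^ (2 ^ 1) = a ^ (2^1) - b ^ (2^1)"
    by (rule frob_diff) (use assms in auto)
  then have "(a - b) ^ 2 = 0" using assms by simp
  then show ?thesis by simp
qed

lemma char2_P_inj:
  fixes u w :: "'a::field"
  assumes ch: "CHAR('a) = 2" and hm: "odd m" and hQm: "\<And>z::'a. z ^ (2^(l*m)) = z"
    and e: "u ^ (2^l + 1) = w ^ (2^l + 1)"
  shows "u = w"
proof (cases "w = 0")
  case True
  then show ?thesis using e by simp
next
  case False
  define r where "r = u / w"
  have r1: "r ^ (2^l + 1) = 1" using e False by (simp add: r_def power_divide)
  then have r0: "r \<noteq> 0" by (cases "r = 0") auto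
  have rQ: "r ^ (2^l) = inverse r" using r1 r0 by (simp add: field_simps)
  have it: "r ^ (2^(l*i)) = (if even i then r else inverse r)" for i
  proof (induction i)
    case 0 then show ?case by simp
  next
    case (Suc i)
    have "r ^ (2^(l * Suc i)) = (r ^ (2^(l*i))) ^ (2^l)"
      by (simp add: power_mult[symmetric] power_add mult.commute)
    also have "\<dots> = (if even (Suc i) then r else inverse r)"
      using Suc rQ by (simp add: power_inverse)
    finally show ?case .
  qed
  have "r = inverse r" using it[of m] hQm[of r] hm by simp
  then have "r * r = 1" using r0 by (metis right_inverse)
  then have "r ^ 2 = 1 ^ 2" by (simp add: power2_eq_square)
  then have "r = 1" by (rule char2_sq_inj[OF ch])
  then show ?thesis using False by (simp add: r_def)
qed

lemma char2_G0:
  fixes z :: "'a::field"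
  assumes ch: "CHAR('a) = 2" and "z ^ q = z" and "z ^ (q^2) = z + z ^ q"
  shows "z = 0"
proof -
  have "z ^ (q^2) = z" using assms(2) by (simp add: power2_eq_square power_mult)
  then have "z + z = z + 0" using assms by simp
  then show ?thesis by (rule add_left_imp_eq)
qed

lemma char2_core:
  fixes x y :: "'a::field"
  assumes ch: "CHAR('a) = 2" and hm: "odd m" and hQm: "\<And>z::'a. z ^ (2^(l*m)) = z"
    and hx: "x ^ ((2^k)^2) = x + x ^ (2^k)" and hy: "y ^ ((2^k)^2) = y + y ^ (2^k)"
    and hc: "(x ^ (2^l+1) + y ^ (2^l+1)) ^ (2^k) = x ^ (2^l+1) + y ^ (2^l+1)"
  shows "x = y"
proof -
  define q :: nat where "q = 2^k"
  define Q :: nat where "Q = 2^l"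
  have two: "(2::'a) = 0" by (rule char2_two[OF ch])
  have pr2: "prime (2::nat)" by simp
  have addq: "(a + b) ^ q = a ^ q + b ^ q" for a b :: 'a unfolding q_def by (rule frob_add[OF ch pr2])
  have addQ: "(a + b) ^ Q = a ^ Q + b ^ Q" for a b :: 'a unfolding Q_def by (rule frob_add[OF ch pr2])
  have add2: "(a + b) ^ (2^n) = a ^ (2^n) + b ^ (2^n)" for a b :: 'a and n by (rule frob_add[OF ch pr2])
  have neg: "- a = a" for a :: 'a by (rule char2_neg[OF ch])
  have comm: "(a ^ Q) ^ q = (a ^ q) ^ Q" for a :: 'a by (simp add: power_mult[symmetric] mult.commute)
  have Pinj: "u ^ (Q+1) = w ^ (Q+1) \<Longrightarrow> u = w" for u w :: 'a
    unfolding Q_def by (rule char2_P_inj[OF ch hm hQm])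
  have G0: "z ^ q = z \<Longrightarrow> z ^ (q^2) = z + z ^ q \<Longrightarrow> z = 0" for z :: 'a
    by (rule char2_G0[OF ch])
  have hx': "x ^ (q^2) = x + x ^ q" and hy': "y ^ (q^2) = y + y ^ q" using hx hy q_def by simp_all
  define x1 where "x1 = x ^ q"
  define y1 where "y1 = y ^ q"
  have xq: "x ^ q = x1" and yq: "y ^ q = y1" by (simp_all add: x1_def y1_def)
  have x1q: "x1 ^ q = x + x1" using hx' by (simp add: x1_def power2_eq_square power_mult)
  have y1q: "y1 ^ q = y + y1" using hy' by (simp add: y1_def power2_eq_square power_mult)
  define c where "c = x^(Q+1) + y^(Q+1)"
  have cq: "c ^ q = c" using hc by (simp add: c_def q_def Q_def)
  define D where "D = x*y1 + x1*y"
  have Dq: "D ^ q = D"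
  proof -
    have "D ^ q = x1 * (y + y1) + (x + x1) * y1" by (simp add: D_def addq power_mult_distrib xq yq x1q y1q)
    also have "\<dots> = x1*y + x*y1 + 2*(x1*y1)" by (simp add: algebra_simps)
    finally show ?thesis using two by (simp add: D_def add.commute)
  qed
  show "x = y"
  proof (cases "D = 0")
    case True
    have xy1: "x*y1 = x1*y" using True neg[of "x1*y"] by (simp add: D_def eq_neg_iff_add_eq_0[symmetric])
    show ?thesis
    proof (cases "x = 0")
      case True
      then have "c = y^(Q+1)" by (simp add: c_def)
      moreover have "(y^q)^(Q+1) = (y^(Q+1))^q" by (simp only: power_mult[symmetric] mult.commute)
      ultimately have "(y^q)^(Q+1) = y^(Q+1)" using cq by simp
      then have "y ^ q = y" by (rule Pinj)
      then have "y = 0" using G0 hy' by blast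
      then show ?thesis using True by simp
    next
      case False
      have x10: "x1 \<noteq> 0" using False by (simp add: x1_def)
      define lam where "lam = y / x"
      have lq: "lam ^ q = lam"
        using xy1 False x10 by (simp add: lam_def power_divide xq yq field_simps)
      have yl: "y = lam * x" using False by (simp add: lam_def)
      have cl: "c = (1 + lam^(Q+1)) * x^(Q+1)" by (simp add: c_def yl power_mult_distrib algebra_simps)
      show ?thesis
      proof (cases "lam^(Q+1) = 1")
        case True
        then have "lam^(Q+1) = 1^(Q+1)" by simp
        then have "lam = 1" by (rule Pinj)
        then show ?thesis using yl by simp
      next
        case False
        define s where "s = 1 + lam^(Q+1)"
        have s0: "s \<noteq> 0"
        proof
          assume "s = 0"
          then have "lam^(Q+1) = - 1" by (simp add: s_def eq_neg_iff_add_eq_0 add.commute)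
          then show False using False neg[of 1] by simp
        qed
        have "(lam^(Q+1))^q = (lam^q)^(Q+1)" by (simp only: power_mult[symmetric] mult.commute)
        then have sq: "s ^ q = s" by (simp add: s_def addq lq)
        have cs: "c = s * x^(Q+1)" using cl s_def by simp
        have "(x^(Q+1))^q = (x^q)^(Q+1)" by (simp only: power_mult[symmetric] mult.commute)
        then have "c ^ q = s * x1^(Q+1)"
          using sq by (simp add: cs power_mult_distrib xq)
        then have "s * x1^(Q+1) = s * x^(Q+1)" using cq cs by simp
        then have "x1^(Q+1) = x^(Q+1)" using s0 by simp
        then have "x1 = x" by (rule Pinj)
        then have "x = 0" using G0 hx' xq by metis
        then show ?thesis using \<open>x \<noteq> 0\<close> by simp
      qed
    qed
  next
    case False
    note D0 = False
    define XQ where "XQ = x^Q"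
    define YQ where "YQ = y^Q"
    define X1Q where "X1Q = x1^Q"
    define Y1Q where "Y1Q = y1^Q"
    have XQq: "XQ ^ q = X1Q" by (simp add: XQ_def X1Q_def comm xq)
    have YQq: "YQ ^ q = Y1Q" by (simp add: YQ_def Y1Q_def comm yq)
    have X1Qq: "X1Q ^ q = XQ + X1Q" by (simp add: X1Q_def comm x1q addQ XQ_def)
    have Y1Qq: "Y1Q ^ q = YQ + Y1Q" by (simp add: Y1Q_def comm y1q addQ YQ_def)
    have ca: "c = XQ*x + YQ*y" by (simp add: c_def XQ_def YQ_def)
    have cb: "c = X1Q*x1 + Y1Q*y1"
    proof -
      have "c ^ q = X1Q*x1 + Y1Q*y1" by (simp add: ca addq power_mult_distrib XQq YQq xq yq)
      then show ?thesis using cq by simp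
    qed
    define \<beta> where "\<beta> = XQ*x1 + YQ*y1"
    define \<beta>' where "\<beta>' = X1Q*x + Y1Q*y"
    have "c ^ (q^2) = c" using cq by (simp add: power2_eq_square power_mult)
    moreover have "c ^ (q^2) = (XQ+X1Q)*(x+x1) + (YQ+Y1Q)*(y+y1)"
    proof -
      have "c ^ (q^2) = (c^q)^q" by (simp add: power2_eq_square power_mult)
      also have "\<dots> = (XQ+X1Q)*(x+x1) + (YQ+Y1Q)*(y+y1)"
        by (subst cq, subst cb) (simp add: addq power_mult_distrib X1Qq Y1Qq x1q y1q)
      finally show ?thesis .
    qed
    moreover have "(XQ+X1Q)*(x+x1) + (YQ+Y1Q)*(y+y1) = (XQ*x + YQ*y) + \<beta> + \<beta>' + (X1Q*x1 + Y1Q*y1)"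
      by (simp add: \<beta>_def \<beta>'_def algebra_simps)
    ultimately have "c = c + (\<beta> + \<beta>' + c)" using ca cb by (simp add: add.assoc)
    then have "\<beta> + \<beta>' + c = 0" by (simp add: ac_simps)
    then have bb: "\<beta>' = \<beta> + c" using neg[of "\<beta> + c"]
      by (metis add.commute add.left_commute eq_neg_iff_add_eq_0)
    have bq: "\<beta> ^ q = \<beta>"
    proof -
      have "\<beta> ^ q = X1Q*(x+x1) + Y1Q*(y+y1)" by (simp add: \<beta>_def addq power_mult_distrib XQq YQq x1q y1q)
      also have "\<dots> = \<beta>' + (X1Q*x1 + Y1Q*y1)" by (simp add: \<beta>'_def algebra_simps)
      also have "\<dots> = \<beta> + 2*c" using cb bb by simp
      finally show ?thesis using two by simp
    qed
    have b'q: "\<beta>' ^ q = \<beta>'" using bq cq bb addq by simp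
    have DQ: "D ^ Q = XQ*Y1Q + X1Q*YQ" by (simp add: D_def addQ power_mult_distrib XQ_def YQ_def X1Q_def Y1Q_def)
    have DQ0: "D ^ Q \<noteq> 0" using D0 by simp
    define \<Delta> where "\<Delta> = c*c + \<beta>*\<beta>'"
    have "(XQ*x + YQ*y)*(X1Q*x1 + Y1Q*y1) + (XQ*x1 + YQ*y1)*(X1Q*x + Y1Q*y)
        = (XQ*Y1Q + X1Q*YQ)*(x*y1 + x1*y) + 2*(XQ*X1Q*x*x1 + YQ*Y1Q*y*y1)"
      by (simp add: algebra_simps)
    moreover have "c*c = (XQ*x + YQ*y)*(X1Q*x1 + Y1Q*y1)" by (metis ca cb)
    ultimately have "\<Delta> = (XQ*Y1Q + X1Q*YQ)*(x*y1 + x1*y)" using two by (simp add: \<Delta>_def \<beta>_def \<beta>'_def)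
    moreover have "D^Q * D = (XQ*Y1Q + X1Q*YQ)*(x*y1 + x1*y)" by (subst DQ) (simp add: D_def)
    ultimately have DD: "\<Delta> = D^Q * D" by simp
    have \<Delta>0: "\<Delta> \<noteq> 0" using DD DQ0 D0 by simp
    have \<Delta>q: "\<Delta> ^ q = \<Delta>" by (simp add: \<Delta>_def addq power_mult_distrib cq bq b'q)
    have cQq: "(c^Q)^q = c^Q" by (simp add: comm cq)
    have bQq: "(\<beta>^Q)^q = \<beta>^Q" by (simp add: comm bq)
    have XQQ: "XQ^Q * XQ + YQ^Q * YQ = c^Q"
      by (simp add: ca addQ power_mult_distrib XQ_def YQ_def mult.commute)
    have XQQ': "XQ^Q * X1Q + YQ^Q * Y1Q = \<beta>^Q"
      by (simp add: \<beta>_def addQ power_mult_distrib X1Q_def Y1Q_def mult.commute)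
    define a where "a = (c^Q*c + \<beta>*\<beta>^Q) / \<Delta>"
    define b where "b = (c*\<beta>^Q + \<beta>'*c^Q) / \<Delta>"
    have aD: "a * \<Delta> = c^Q*c + \<beta>*\<beta>^Q" using \<Delta>0 by (simp add: a_def)
    have bD: "b * \<Delta> = c*\<beta>^Q + \<beta>'*c^Q" using \<Delta>0 by (simp add: b_def)
    have aq: "a ^ q = a" by (simp add: a_def power_divide \<Delta>q addq power_mult_distrib cq bq cQq bQq)
    have bq': "b ^ q = b" by (simp add: b_def power_divide \<Delta>q addq power_mult_distrib cq b'q cQq bQq)
    have eq1: "a*c + b*\<beta> = c^Q"
    proof -
      have "(a*c + b*\<beta>) * \<Delta> = (a*\<Delta>)*c + (b*\<Delta>)*\<beta>" by (simp add: algebra_simps)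
      also have "\<dots> = c^Q * \<Delta> + 2*(c*\<beta>*\<beta>^Q)" by (simp only: aD bD) (simp add: \<Delta>_def algebra_simps)
      finally have "(a*c + b*\<beta>) * \<Delta> = c^Q * \<Delta>" using two by simp
      then show ?thesis using \<Delta>0 by simp
    qed
    have eq2: "a*\<beta>' + b*c = \<beta>^Q"
    proof -
      have "(a*\<beta>' + b*c) * \<Delta> = (a*\<Delta>)*\<beta>' + (b*\<Delta>)*c" by (simp add: algebra_simps)
      also have "\<dots> = \<beta>^Q * \<Delta> + 2*(c^Q*c*\<beta>')" by (simp only: aD bD) (simp add: \<Delta>_def algebra_simps)
      finally have "(a*\<beta>' + b*c) * \<Delta> = \<beta>^Q * \<Delta>" using two by simp
      then show ?thesis using \<Delta>0 by simp
    qed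
    define e1 where "e1 = a*x + b*x1 + XQ^Q"
    define e2 where "e2 = a*y + b*y1 + YQ^Q"
    have n1: "e1*XQ + e2*YQ = 0"
    proof -
      have "e1*XQ + e2*YQ = a*(XQ*x + YQ*y) + b*(XQ*x1 + YQ*y1) + (XQ^Q*XQ + YQ^Q*YQ)"
        by (simp add: e1_def e2_def algebra_simps)
      also have "\<dots> = 2 * c^Q" using eq1 XQQ ca by (simp add: \<beta>_def[symmetric])
      finally show ?thesis using two by simp
    qed
    have n2: "e1*X1Q + e2*Y1Q = 0"
    proof -
      have "e1*X1Q + e2*Y1Q = a*(X1Q*x + Y1Q*y) + b*(X1Q*x1 + Y1Q*y1) + (XQ^Q*X1Q + YQ^Q*Y1Q)"
        by (simp add: e1_def e2_def algebra_simps)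
      also have "\<dots> = 2 * \<beta>^Q" using eq2 XQQ' cb by (simp add: \<beta>'_def[symmetric])
      finally show ?thesis using two by simp
    qed
    have "e1 * D^Q = Y1Q*(e1*XQ + e2*YQ) + YQ*(e1*X1Q + e2*Y1Q) - 2*(e2*YQ*Y1Q)"
      by (simp add: DQ algebra_simps)
    then have "e1 * D^Q = 0" using n1 n2 two by simp
    then have e10: "e1 = 0" using DQ0 D0 by simp
    have "e2 * D^Q = X1Q*(e1*XQ + e2*YQ) + XQ*(e1*X1Q + e2*Y1Q) - 2*(e1*XQ*X1Q)"
      by (simp add: DQ algebra_simps)
    then have "e2 * D^Q = 0" using n1 n2 two by simp
    then have e20: "e2 = 0" using DQ0 D0 by simp
    have sumz: "u + w = 0 \<Longrightarrow> w = u" for u w :: 'a using neg[of u] by (metis add.commute eq_neg_iff_add_eq_0)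
    define G where "G r \<longleftrightarrow> (\<exists>a b. a ^ q = a \<and> b ^ q = b \<and> x ^ (2^r) = a*x + b*x1 \<and> y ^ (2^r) = a*y + b*y1)" for r
    have G2l: "G (2*l)"
    proof -
      have "x ^ (2^(2*l)) = XQ^Q" by (simp add: XQ_def Q_def power_mult[symmetric] power_add[symmetric] mult_2)
      moreover have "y ^ (2^(2*l)) = YQ^Q" by (simp add: YQ_def Q_def power_mult[symmetric] power_add[symmetric] mult_2)
      moreover have "XQ^Q = a*x + b*x1" using e10 sumz unfolding e1_def by blast
      moreover have "YQ^Q = a*y + b*y1" using e20 sumz unfolding e2_def by blast
      ultimately show ?thesis unfolding G_def using aq bq' by metis
    qed
    have Gadd: "G (r + r')" if GR: "G r" and GR': "G r'" for r r'
    proof -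
      obtain a b where ab: "a ^ q = a" "b ^ q = b" "x ^ (2^r) = a*x + b*x1" "y ^ (2^r) = a*y + b*y1"
        using GR unfolding G_def by blast
      obtain a' b' where ab': "a' ^ q = a'" "b' ^ q = b'" "x ^ (2^r') = a'*x + b'*x1" "y ^ (2^r') = a'*y + b'*y1"
        using GR' unfolding G_def by blast
      define R where "R = (2::nat)^r'"
      have pcomm: "(u ^ R) ^ q = (u ^ q) ^ R" for u :: 'a by (simp only: power_mult[symmetric] mult.commute)
      have addR: "(u + w) ^ R = u ^ R + w ^ R" for u w :: 'a unfolding R_def by (rule add2)
      define A where "A = a^R*a' + b^R*b'"
      define B where "B = a^R*b' + b^R*(a'+b')"
      have xR: "x ^ R = a'*x + b'*x1" and yR: "y ^ R = a'*y + b'*y1" using ab' by (simp_all add: R_def)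
      have x1R: "x1 ^ R = a'*x1 + b'*(x+x1)"
      proof -
        have "x1 ^ R = (x ^ R) ^ q" by (simp add: xq[symmetric] pcomm)
        also have "\<dots> = a'*x1 + b'*(x+x1)" using ab' by (simp add: R_def addq power_mult_distrib xq x1q)
        finally show ?thesis .
      qed
      have y1R: "y1 ^ R = a'*y1 + b'*(y+y1)"
      proof -
        have "y1 ^ R = (y ^ R) ^ q" by (simp add: yq[symmetric] pcomm)
        also have "\<dots> = a'*y1 + b'*(y+y1)" using ab' by (simp add: R_def addq power_mult_distrib yq y1q)
        finally show ?thesis .
      qed
      have "x ^ (2^(r+r')) = (x ^ (2^r)) ^ R" by (simp add: R_def power_add power_mult)
      also have "\<dots> = a^R * x^R + b^R * x1^R" using ab by (simp add: addR power_mult_distrib)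
      also have "\<dots> = A*x + B*x1" using xR by (simp add: x1R A_def B_def algebra_simps)
      finally have hxA: "x ^ (2^(r+r')) = A*x + B*x1" .
      have "y ^ (2^(r+r')) = (y ^ (2^r)) ^ R" by (simp add: R_def power_add power_mult)
      also have "\<dots> = a^R * y^R + b^R * y1^R" using ab by (simp add: addR power_mult_distrib)
      also have "\<dots> = A*y + B*y1" using yR by (simp add: y1R A_def B_def algebra_simps)
      finally have hyA: "y ^ (2^(r+r')) = A*y + B*y1" .
      have aRq: "(a^R)^q = a^R" by (subst pcomm) (simp add: ab)
      have bRq: "(b^R)^q = b^R" by (subst pcomm) (simp add: ab)
      have Aq: "A ^ q = A" using ab' by (simp add: A_def addq power_mult_distrib aRq bRq)
      have Bq: "B ^ q = B" using ab' by (simp add: B_def addq power_mult_distrib aRq bRq)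
      show ?thesis unfolding G_def using Aq Bq hxA hyA by blast
    qed
    have G0': "G 0" unfolding G_def by (rule exI[of _ 1], rule exI[of _ 0]) (simp add: q_def)
    have Gj: "G (2*l*j)" for j
    proof (induction j)
      case 0 then show ?case using G0' by simp
    next
      case (Suc j)
      have "G (2*l*j + 2*l)" by (rule Gadd[OF Suc G2l])
      moreover have "2*l*Suc j = 2*l*j + 2*l" by simp
      ultimately show ?case by metis
    qed
    obtain i where mi: "m = 2*i+1" using hm oddE by blast
    have "2*l*(i+1) = l*m + l" by (simp add: mi algebra_simps)
    then have "G (l*m + l)" using Gj[of "i+1"] by metis
    moreover have "x ^ (2^(l*m+l)) = XQ"
    proof -
      have "x ^ (2^(l*m+l)) = (x ^ (2^(l*m))) ^ (2^l)" by (simp only: power_add power_mult[symmetric])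
      then show ?thesis using hQm[of x] by (simp add: XQ_def Q_def)
    qed
    moreover have "y ^ (2^(l*m+l)) = YQ"
    proof -
      have "y ^ (2^(l*m+l)) = (y ^ (2^(l*m))) ^ (2^l)" by (simp only: power_add power_mult[symmetric])
      then show ?thesis using hQm[of y] by (simp add: YQ_def Q_def)
    qed
    ultimately obtain a b where ab: "a ^ q = a" "b ^ q = b" "XQ = a*x + b*x1" "YQ = a*y + b*y1"
      unfolding G_def by auto
    have X1Qab: "X1Q = a*x1 + b*(x+x1)" using XQq ab by (simp add: addq power_mult_distrib xq x1q)
    have Y1Qab: "Y1Q = a*y1 + b*(y+y1)" using YQq ab by (simp add: addq power_mult_distrib yq y1q)
    define s where "s = x*x + y*y"
    define t where "t = x*x1 + y*y1"
    have cst: "c = a*s + b*t" using ca ab by (simp add: s_def t_def algebra_simps)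
    have bst: "\<beta>' = a*t + b*s + b*t" using X1Qab Y1Qab by (simp add: \<beta>'_def s_def t_def algebra_simps)
    define \<Delta>2 where "\<Delta>2 = a*(a+b) + b*b"
    have "(a*x + b*x1)*(a*y1 + b*(y+y1)) + (a*x1 + b*(x+x1))*(a*y + b*y1)
          = \<Delta>2*(x*y1 + x1*y) + 2*(a*b*x*y + b*(a+b)*x1*y1)"
      by (simp add: \<Delta>2_def algebra_simps)
    then have "D^Q = \<Delta>2 * D" using two DQ ab X1Qab Y1Qab by (simp add: D_def)
    then have \<Delta>20: "\<Delta>2 \<noteq> 0" using DQ0 by auto
    have "s * \<Delta>2 = (a+b)*c + b*\<beta>' - 2*(b*(a+b)*t)"
      by (simp add: cst bst \<Delta>2_def algebra_simps)
    then have "s * \<Delta>2 = (a+b)*c + b*\<beta>'" using two by simp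
    then have sdef: "s = ((a+b)*c + b*\<beta>') / \<Delta>2" using \<Delta>20 by (simp add: field_simps)
    have sq: "s ^ q = s" using ab by (simp add: sdef \<Delta>2_def power_divide addq power_mult_distrib cq b'q)
    have s2: "s = (x+y)^2" using two by (simp add: s_def power2_eq_square algebra_simps)
    have "((x+y)^q)^2 = ((x+y)^2)^q" by (simp only: power_mult[symmetric] mult.commute)
    then have "((x+y)^q)^2 = (x+y)^2" using sq s2 by simp
    then have zq: "(x+y)^q = x+y" by (rule char2_sq_inj[OF ch])
    have "(x+y)^(q^2) = (x+y) + (x+y)^q"
    proof -
      have "(x+y)^(q^2) = x^(q^2) + y^(q^2)" unfolding q_def power_mult[symmetric] power2_eq_square
        by (simp only: power_add[symmetric] add2)
      then show ?thesis using hx' hy' by (simp add: addq algebra_simps)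
    qed
    then have "x + y = 0" using G0 zq by blast
    then show ?thesis using sumz by metis
  qed
qed




lemma dvd_pow_diff: "(x - y) dvd (x ^ n - (y ^ n :: 'a::comm_ring_1))"
proof (induction n)
  case 0 then show ?case by simp
next
  case (Suc n)
  have "x ^ Suc n - y ^ Suc n = x * (x ^ n - y ^ n) + (x - y) * y ^ n" by (simp add: algebra_simps)
  then show ?case using Suc by simp
qed

lemma dvd_pow_sub1: "(x - 1) dvd (x ^ n - (1 :: 'a::comm_ring_1))"
  using dvd_pow_diff[of x 1 n] by simp

lemma dvd_pow_add1: assumes "odd n" shows "(x + 1) dvd (x ^ n + (1 :: 'a::comm_ring_1))"
  using dvd_pow_diff[of x "-1" n] assms by simp

lemma odd_decomp:
  fixes n :: nat
  assumes "n > 0"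
  shows "\<exists>e a. n = 2^e * a \<and> odd a \<and> (\<forall>i. 2^i dvd n \<longrightarrow> i \<le> e)"
  using assms
proof (induction n rule: less_induct)
  case (less n)
  show ?case
  proof (cases "odd n")
    case True
    have "\<forall>i. 2^i dvd n \<longrightarrow> i \<le> 0"
    proof (intro allI impI)
      fix i :: nat assume "2^i dvd n"
      show "i \<le> 0"
      proof (rule ccontr)
        assume "\<not> i \<le> 0"
        then have "(2::nat) dvd 2^i" by (simp add: dvd_power)
        then show False using \<open>2^i dvd n\<close> True dvd_trans by blast
      qed
    qed
    then show ?thesis using True by (intro exI[of _ 0] exI[of _ n]) simp
  next
    case False
    then obtain n' where n': "n = 2 * n'" by blast
    with less.prems have "n' > 0" "n' < n" by auto
    then obtain e a where ea: "n' = 2^e * a" "odd a" "\<forall>i. 2^i dvd n' \<longrightarrow> i \<le> e"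
      using less.IH by blast
    have "\<forall>i. 2^i dvd n \<longrightarrow> i \<le> Suc e"
    proof (intro allI impI)
      fix i :: nat assume h: "2^i dvd n"
      show "i \<le> Suc e"
      proof (cases i)
        case 0 then show ?thesis by simp
      next
        case (Suc j)
        then have "2 * 2^j dvd 2 * n'" using h n' by simp
        then have "2^j dvd n'" by simp
        then show ?thesis using ea Suc by simp
      qed
    qed
    then show ?thesis using ea n' by (intro exI[of _ "Suc e"] exI[of _ a]) simp
  qed
qed

lemma ord2_le_iff:
  assumes "k > 0"
  shows "ord2 (int k) \<le> ord2 (int l) \<longleftrightarrow> (\<forall>i. (2::nat)^i dvd k \<longrightarrow> 2^i dvd l)"
proof (cases "l = 0")
  case True then show ?thesis by (simp add: ord2_def)
next
  case False
  have nu: "\<not> is_unit (2::int)" by simp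
  have "ord2 (int k) \<le> ord2 (int l) \<longleftrightarrow> multiplicity 2 (int k) \<le> multiplicity 2 (int l)"
    using assms False by (simp add: ord2_def)
  also have "\<dots> \<longleftrightarrow> (\<forall>i. i \<le> multiplicity 2 (int k) \<longrightarrow> i \<le> multiplicity 2 (int l))"
    by (meson order_trans order_refl)
  also have "\<dots> \<longleftrightarrow> (\<forall>i. (2::int)^i dvd int k \<longrightarrow> (2::int)^i dvd int l)"
    using assms False by (simp add: power_dvd_iff_le_multiplicity[OF _ nu])
  also have "\<dots> \<longleftrightarrow> (\<forall>i. (2::nat)^i dvd k \<longrightarrow> 2^i dvd l)"
  proof -
    have "(2::int)^i dvd int n \<longleftrightarrow> 2^i dvd n" for i n
      using int_dvd_int_iff[of "2^i" n] by simp
    then show ?thesis by simp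
  qed
  finally show ?thesis .
qed

lemma gcd_part:
  fixes p k l :: nat
  assumes p: "prime p" and k: "k > 0"
  shows "gcd (p^k - 1) (p^l + 1) = 1 \<longleftrightarrow> (p = 2 \<and> (\<forall>i. (2::nat)^i dvd k \<longrightarrow> 2^i dvd l))"
proof
  assume g: "gcd (p^k - 1) (p^l + 1) = 1"
  show "p = 2 \<and> (\<forall>i. (2::nat)^i dvd k \<longrightarrow> 2^i dvd l)"
  proof (rule ccontr)
    assume nc: "\<not> (p = 2 \<and> (\<forall>i. (2::nat)^i dvd k \<longrightarrow> 2^i dvd l))"
    show False
    proof (cases "p = 2")
      case False
      moreover have "p \<ge> 2" using p prime_ge_2_nat by blast
      ultimately have "p > 2" by simp
      then have "odd p" using p prime_odd_nat by blast
      then have o1: "odd (p^k)" and o2: "odd (p^l)" by simp_all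
      obtain t where t: "p^k = 2*t+1" using o1 oddE by blast
      obtain t' where t': "p^l = 2*t'+1" using o2 oddE by blast
      have "2 dvd p^k - 1" using t by simp
      moreover have "2 dvd p^l + 1" using t' by presburger
      ultimately have "2 dvd gcd (p^k - 1) (p^l + 1)" by (rule gcd_greatest)
      then have "(2::nat) dvd 1" by (simp only: g)
      then show False by simp
    next
      case True
      then obtain i where i: "(2::nat)^i dvd k" "\<not> 2^i dvd l" using nc by blast
      then have l0: "l > 0" by (cases "l = 0") auto
      obtain e b where eb: "l = 2^e * b" "odd b" "\<forall>i. 2^i dvd l \<longrightarrow> i \<le> e"
        using odd_decomp[OF l0] by blast
      have "\<not> i \<le> e"
      proof
        assume "i \<le> e"
        then have "(2::nat)^i dvd 2^e" by (rule le_imp_power_dvd)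
        then show False using i(2) eb(1) dvd_mult2 by blast
      qed
      then have "(2::nat)^(Suc e) dvd 2^i" by (intro le_imp_power_dvd) simp
      then have "(2::nat)^(Suc e) dvd k" using i(1) dvd_trans by blast
      then obtain c where c: "k = 2^(Suc e) * c" by blast
      define Zn :: nat where "Zn = 2^(2^e)"
      have Zpos: "Zn > 0" by (simp add: Zn_def)
      have h1: "int (2^l + 1) = (int Zn)^b + 1"
        by (simp add: eb(1) Zn_def power_mult)
      have h2: "int (2^k - 1) = ((int Zn)^2)^c - 1"
      proof -
        have "(1::nat) \<le> 2^k" by simp
        then have "int (2^k - 1) = 2^k - 1" by (simp add: of_nat_diff)
        also have "(2::int)^k = ((int Zn)^2)^c" by (simp add: c Zn_def power_mult[symmetric] mult.commute mult.left_commute)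
        finally show ?thesis .
      qed
      have iZ: "int (Zn + 1) = int Zn + 1" by simp
      have d1: "int (Zn + 1) dvd int (2^l + 1)"
        by (subst h1, subst iZ) (rule dvd_pow_add1[OF eb(2)])
      have "(int Zn + 1) dvd (int Zn)^2 - 1"
        using dvd_pow_diff[of "int Zn" "-1" 2] by simp
      moreover have "(int Zn)^2 - 1 dvd ((int Zn)^2)^c - 1" by (rule dvd_pow_sub1)
      ultimately have "(int Zn + 1) dvd ((int Zn)^2)^c - 1" by (rule dvd_trans)
      then have d2: "int (Zn + 1) dvd int (2^k - 1)" by (subst h2, subst iZ)
      have "Zn + 1 dvd gcd (2^k - 1) (2^l + 1)"
        using d1 d2 by (simp only: int_dvd_int_iff) (rule gcd_greatest)
      moreover have g': "gcd (2^k - 1) (2^l + 1) = (1::nat)" using g True by simp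
      ultimately have "Zn + 1 dvd 1" by (simp only: g')
      then show False using Zpos by simp
    qed
  qed
next
  assume "p = 2 \<and> (\<forall>i. (2::nat)^i dvd k \<longrightarrow> 2^i dvd l)"
  then have p2: "p = 2" and Dv: "\<And>i. (2::nat)^i dvd k \<Longrightarrow> 2^i dvd l" by auto
  obtain e a where ea: "k = 2^e * a" "odd a" using odd_decomp[OF k] by blast
  have "2^e dvd l" using Dv ea by simp
  then obtain b where b: "l = 2^e * b" by blast
  define Z :: int where "Z = 2^(2^e)"
  define g where "g = gcd (2^k - 1) (2^l + 1 :: nat)"
  have "g dvd 2^k - 1" "g dvd 2^l + 1" by (simp_all add: g_def)
  then have gd1: "int g dvd int (2^k - 1)" and gd2: "int g dvd int (2^l + 1)" by (simp_all only: int_dvd_int_iff)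
  have h1: "int (2^k - 1) = Z^a - 1"
  proof -
    have "(1::nat) \<le> 2^k" by simp
    then have "int (2^k - 1) = 2^k - 1" by (simp add: of_nat_diff)
    also have "(2::int)^k = Z^a" by (simp add: ea Z_def power_mult)
    finally show ?thesis .
  qed
  have h2: "int (2^l + 1) = Z^b + 1" by (simp add: b Z_def power_mult)
  have "int g dvd (Z^a)^b - 1" using gd1 h1 dvd_pow_sub1[of "Z^a" b] dvd_trans by metis
  moreover have "int g dvd (Z^b)^a + 1" using gd2 h2 dvd_pow_add1[OF ea(2), of "Z^b"] dvd_trans by metis
  moreover have "(Z^a)^b = (Z^b)^a" by (simp add: power_mult[symmetric] mult.commute)
  ultimately have "int g dvd ((Z^b)^a + 1) - ((Z^b)^a - 1)" by (metis dvd_diff)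
  then have "int g dvd int 2" by simp
  then have g2: "g dvd 2" by (simp only: int_dvd_int_iff)
  have "odd (2^k - 1 :: nat)" using k by (simp add: even_diff_nat)
  then have "odd g" using \<open>g dvd 2^k - 1\<close> dvd_trans by blast
  then have "g = 1" using g2 by (metis dvd_antisym dvd_refl nat_dvd_1_iff_1 prime_nat_iff two_is_prime_nat)
  then show "gcd (p^k - 1) (p^l + 1) = 1" by (simp add: p2 g_def)
qed



lemma odd_mult_exists:
  fixes k l :: nat
  assumes "k > 0" "\<forall>i. (2::nat)^i dvd k \<longrightarrow> 2^i dvd l"
  shows "\<exists>m b. odd m \<and> l * m = 3 * k * b"
proof -
  obtain e a where ea: "k = 2^e * a" "odd a" using odd_decomp[OF assms(1)] by blast
  have "2^e dvd l" using assms(2) ea by simp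
  then obtain b where b: "l = 2^e * b" by blast
  have "l * (3*a) = 3 * k * b" by (simp add: ea b algebra_simps)
  moreover have "odd (3*a)" using ea by simp
  ultimately show ?thesis by blast
qed

lemma ff_power_card_pow:
  fixes z :: "'a::{field,finite}"
  shows "z ^ (card (UNIV::'a set) ^ b) = z"
  by (induction b) (simp_all add: ff_power_card power_mult)

lemma qpow_facts:
  fixes p k :: nat
  assumes p: "prime p" and card: "card (UNIV :: 'a::{field,finite} set) = p ^ (3 * k)"
  shows "CHAR('a) = p" "\<And>z::'a. z ^ ((p^k)^3) = z"
    "\<And>a b::'a. (a + b) ^ ((p^k)^j) = a ^ ((p^k)^j) + b ^ ((p^k)^j)"
    "\<And>a b::'a. (a - b) ^ ((p^k)^j) = a ^ ((p^k)^j) - b ^ ((p^k)^j)"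
proof -
  show ch: "CHAR('a) = p" by (rule ff_CHAR[OF p card])
  show "z ^ ((p^k)^3) = z" for z :: 'a
    using ff_power_card[of z] card by (simp add: power_mult[symmetric] mult.commute)
  show "(a + b) ^ ((p^k)^j) = a ^ ((p^k)^j) + b ^ ((p^k)^j)" for a b :: 'a
    unfolding power_mult[symmetric] by (rule frob_add[OF ch p])
  show "(a - b) ^ ((p^k)^j) = a ^ ((p^k)^j) - b ^ ((p^k)^j)" for a b :: 'a
    unfolding power_mult[symmetric] by (rule frob_diff[OF ch p])
qed

lemma trace_sub:
  fixes p k :: nat
  assumes p: "prime p" and card: "card (UNIV :: 'a::{field,finite} set) = p ^ (3 * k)"
  shows "(u ^ (p^k) - u) ^ ((p^k)^2) + (u ^ (p^k) - u) ^ (p^k) + (u ^ (p^k) - (u::'a)) = 0"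
proof -
  define q where "q = p^k"
  note F = qpow_facts[OF p card, folded q_def]
  have d2: "(u ^ q - u) ^ (q^2) = u ^ (q^3) - u ^ (q^2)"
    using F(4)[of "u^q" u 2] by (simp add: power_mult[symmetric] power2_eq_square power3_eq_cube mult.assoc)
  have d1: "(u ^ q - u) ^ q = u ^ (q^2) - u ^ q"
    using F(4)[of "u^q" u 1] by (simp add: power_mult[symmetric] power2_eq_square)
  show ?thesis unfolding q_def[symmetric] using d1 d2 F(2)[of u] by simp
qed

lemma not_inj_part:
  fixes p k l d :: nat
  assumes p: "prime p" and k: "k > 0" and card: "card (UNIV :: 'a::{field,finite} set) = p ^ (3 * k)"
    and d: "d \<ge> 2" "d dvd p^k - 1" "d dvd p^l + 1"
  shows "\<not> inj_on (\<lambda>x::'a. x ^ (p^k * (p^l + 1)) - x ^ (p^l + 1)) {x::'a. x ^ ((p^k)^2) + x ^ (p^k) + x = 0}"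
proof
  define q where "q = p^k"
  define Q where "Q = p^l"
  define N where "N = card (UNIV :: 'a set)"
  assume inj: "inj_on (\<lambda>x::'a. x ^ (p^k * (p^l + 1)) - x ^ (p^l + 1)) {x::'a. x ^ ((p^k)^2) + x ^ (p^k) + x = 0}"
  then have inj': "inj_on (\<lambda>x::'a. x ^ (q * (Q + 1)) - x ^ (Q + 1)) {x::'a. x ^ (q^2) + x ^ q + x = 0}"
    by (simp add: q_def Q_def)
  note F = qpow_facts[OF p card, folded q_def]
  have "p^1 \<le> p^k" by (rule power_increasing) (use k prime_gt_0_nat[OF p] in auto)
  then have q2: "q \<ge> 2" using prime_ge_2_nat[OF p] by (simp add: q_def)
  have NQ: "N = q^3" by (simp add: N_def card q_def power_mult[symmetric] mult.commute)
  have N1: "N \<ge> 1" using q2 NQ by simp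
  have pwN: "w ^ (N - 1) = 1" if "w \<noteq> 0" for w :: 'a
  proof -
    have "w ^ (N - 1) * w = w ^ N" using N1 by (metis Suc_diff_1 less_le_trans power_Suc2 zero_less_one)
    also have "\<dots> = w" by (simp add: N_def ff_power_card)
    finally show ?thesis using that by simp
  qed
  have dq: "d dvd q - 1" using d by (simp add: q_def)
  have dN: "d dvd N - 1"
  proof -
    have "int q - 1 dvd (int q)^3 - 1" by (rule dvd_pow_sub1)
    moreover have "int (q - 1) = int q - 1" "int (N - 1) = (int q)^3 - 1" using q2 NQ N1 by (simp_all add: of_nat_diff)
    ultimately have "q - 1 dvd N - 1" by (metis int_dvd_int_iff)
    then show ?thesis using dq dvd_trans by blast
  qed
  have "\<exists>\<zeta>::'a. \<zeta> ^ d = 1 \<and> \<zeta> \<noteq> 1"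
  proof (rule ccontr)
    assume "\<not> (\<exists>\<zeta>::'a. \<zeta> ^ d = 1 \<and> \<zeta> \<noteq> 1)"
    then have H: "\<And>z::'a. z ^ d = 1 \<Longrightarrow> z = 1" by blast
    define S where "S = UNIV - {0::'a}"
    have injS: "inj_on (\<lambda>u::'a. u ^ d) S"
    proof (rule inj_onI)
      fix u w assume "u \<in> S" "w \<in> S" "u ^ d = w ^ d"
      then have "(u / w) ^ d = 1" by (simp add: S_def power_divide)
      then have "u / w = 1" by (rule H)
      then show "u = w" using \<open>w \<in> S\<close> by (simp add: S_def)
    qed
    have "(\<lambda>u::'a. u ^ d) ` S \<subseteq> S" by (auto simp: S_def)
    then have surj: "(\<lambda>u::'a. u ^ d) ` S = S" using injS by (intro endo_inj_surj) auto
    define M where "M = (N - 1) div d"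
    have dM: "d * M = N - 1" using dN by (simp add: M_def)
    have "S \<subseteq> {x. x ^ M = 1}"
    proof
      fix u assume "u \<in> S"
      then obtain w where w: "w \<in> S" "u = w ^ d" using surj by force
      have "u ^ M = w ^ (d * M)" by (simp add: w power_mult)
      also have "\<dots> = 1" using w pwN dM by (simp add: S_def)
      finally show "u \<in> {x. x ^ M = 1}" by simp
    qed
    moreover have "N - 1 > 0"
    proof -
      have "q - 1 \<ge> 1" using q2 by simp
      have "q ^ 3 \<ge> q ^ 1" by (rule power_increasing) (use q2 in auto)
      then show ?thesis using NQ q2 by simp
    qed
    then have M0: "M > 0" using dM by (metis gr0I mult_0_right)
    note M0 = M0
    ultimately have "card S \<le> card {x::'a. x ^ M = 1}" by (intro card_mono) simp_all
    then have "card S \<le> M" using roots_bound[OF M0, of "1::'a"] by linarith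
    moreover have "card S = N - 1" by (simp add: S_def N_def card_Diff_singleton)
    ultimately have "d * M \<le> M" using dM by simp
    then show False using d(1) M0 by simp
  qed
  then obtain \<zeta> :: 'a where z: "\<zeta> ^ d = 1" "\<zeta> \<noteq> 1" by blast
  have zq1: "\<zeta> ^ (q - 1) = 1" using dq z by (metis dvd_def power_mult power_one)
  have zq: "\<zeta> ^ q = \<zeta>"
  proof -
    have "\<zeta> ^ q = \<zeta> ^ (q - 1) * \<zeta>" using q2 by (metis Suc_diff_1 less_le_trans pos2 power_Suc2)
    then show ?thesis using zq1 by simp
  qed
  have zQ: "\<zeta> ^ (Q + 1) = 1" using d(3) z by (metis Q_def dvd_def power_mult power_one)
  have "\<exists>w::'a. w ^ q \<noteq> w"
  proof (rule ccontr)
    assume nw: "\<not> (\<exists>w::'a. w ^ q \<noteq> w)"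
    then have "UNIV \<subseteq> insert 0 {x::'a. x ^ (q - 1) = 1}"
    proof (intro subsetI)
      fix x :: 'a assume "x \<in> UNIV"
      have "x ^ (q - 1) * x = x ^ q" using q2 by (metis Suc_diff_1 less_le_trans pos2 power_Suc2)
      then show "x \<in> insert 0 {x::'a. x ^ (q - 1) = 1}" using nw by auto
    qed
    then have "N \<le> card (insert 0 {x::'a. x ^ (q - 1) = 1})" unfolding N_def by (intro card_mono) auto
    also have "\<dots> \<le> Suc (card {x::'a. x ^ (q - 1) = 1})" by (rule card_insert_le_m1) auto
    also have "\<dots> \<le> Suc (q - 1)" using roots_bound[of "q - 1" "1::'a"] q2 by simp
    finally have "N \<le> q" using q2 by simp
    moreover have "q ^ 3 > q ^ 1" by (rule power_strict_increasing) (use q2 in auto)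
    ultimately show False using NQ by simp
  qed
  then obtain w :: 'a where w: "w ^ q \<noteq> w" by blast
  define x0 where "x0 = w ^ q - w"
  have x00: "x0 \<noteq> 0" using w by (simp add: x0_def)
  have x0G: "x0 ^ (q^2) + x0 ^ q + x0 = 0" unfolding x0_def q_def by (rule trace_sub[OF p card])
  have zq2: "\<zeta> ^ (q^2) = \<zeta>" using zq by (simp add: power2_eq_square power_mult)
  have y0G: "(\<zeta> * x0) ^ (q^2) + (\<zeta> * x0) ^ q + \<zeta> * x0 = 0"
  proof -
    have "(\<zeta> * x0) ^ (q^2) + (\<zeta> * x0) ^ q + \<zeta> * x0 = \<zeta> * (x0 ^ (q^2) + x0 ^ q + x0)"
      by (simp add: power_mult_distrib zq zq2 algebra_simps)
    then show ?thesis using x0G by simp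
  qed
  have zqQ: "\<zeta> ^ (q * (Q + 1)) = 1"
  proof -
    have "\<zeta> ^ (q * (Q + 1)) = (\<zeta> ^ (Q + 1)) ^ q" by (simp only: power_mult[symmetric] mult.commute)
    then show ?thesis using zQ by simp
  qed
  have "(\<zeta> * x0) ^ (q * (Q + 1)) - (\<zeta> * x0) ^ (Q + 1) = x0 ^ (q * (Q + 1)) - x0 ^ (Q + 1)"
    by (simp only: power_mult_distrib zqQ zQ mult_1_left)
  then have "\<zeta> * x0 = x0" using inj' y0G x0G by (auto dest: inj_onD)
  then show False using x00 z(2) by simp
qed

theorem theorem1p6:
  fixes p k l :: nat
  assumes "prime p" and "k > 0"
    and card: "card (UNIV :: 'a set) = p ^ (3 * k)"
  defines "q \<equiv> p ^ k" and "Q \<equiv> p ^ l"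
  defines "\<Gamma> \<equiv> {x :: 'a::{field,finite}. x ^ (q^2) + x ^ q + x = 0}"
  shows "(bij_betw (\<lambda>x. x ^ (q * (Q + 1)) - x ^ (Q + 1)) \<Gamma> \<Gamma>
            \<longleftrightarrow> gcd (q - 1) (Q + 1) = 1)
       \<and> (gcd (q - 1) (Q + 1) = 1 \<longleftrightarrow> (p = 2 \<and> ord2 (int k) \<le> ord2 (int l)))"
proof -
  note p = assms(1) and k = assms(2)
  define f where "f = (\<lambda>x::'a. x ^ (q * (Q + 1)) - x ^ (Q + 1))"
  have gc: "gcd (q - 1) (Q + 1) = 1 \<longleftrightarrow> (p = 2 \<and> ord2 (int k) \<le> ord2 (int l))"
    using gcd_part[OF p k, of l] ord2_le_iff[OF k, of l] by (simp add: q_def Q_def)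
  have fpow: "f x = (x ^ (Q + 1)) ^ q - x ^ (Q + 1)" for x
  proof -
    have "x ^ (q * (Q + 1)) = (x ^ (Q + 1)) ^ q" by (simp only: power_mult[symmetric] mult.commute)
    then show ?thesis by (simp add: f_def)
  qed
  have into: "f ` \<Gamma> \<subseteq> \<Gamma>"
  proof
    fix z assume "z \<in> f ` \<Gamma>"
    then obtain x where "z = f x" by blast
    then show "z \<in> \<Gamma>" using trace_sub[OF p card, of "x ^ (Q + 1)"]
      by (simp add: \<Gamma>_def fpow q_def)
  qed
  have "q - 1 > 0"
  proof -
    have "p^1 \<le> p^k" by (rule power_increasing) (use k prime_gt_0_nat[OF p] in auto)
    then show ?thesis using prime_ge_2_nat[OF p] by (simp add: q_def)
  qed
  have bij_iff: "bij_betw f \<Gamma> \<Gamma> \<longleftrightarrow> gcd (q - 1) (Q + 1) = 1"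
  proof
    assume bij: "bij_betw f \<Gamma> \<Gamma>"
    show "gcd (q - 1) (Q + 1) = 1"
    proof (rule ccontr)
      assume ne: "gcd (q - 1) (Q + 1) \<noteq> 1"
      define d where "d = gcd (q - 1) (Q + 1)"
      have "d \<noteq> 0" using \<open>q - 1 > 0\<close> by (simp add: d_def)
      then have d2: "d \<ge> 2" using ne d_def by linarith
      have dd1: "d dvd p^k - 1" unfolding d_def q_def[symmetric] by (rule gcd_dvd1)
      have dd2: "d dvd p^l + 1" unfolding d_def Q_def[symmetric] by (rule gcd_dvd2)
      have fe: "f = (\<lambda>x::'a. x ^ (p^k * (p^l + 1)) - x ^ (p^l + 1))" by (simp only: f_def q_def Q_def)
      have Ge: "\<Gamma> = {x::'a. x ^ ((p^k)^2) + x ^ (p^k) + x = 0}" by (simp only: \<Gamma>_def q_def)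
      have "\<not> inj_on f \<Gamma>"
        unfolding fe Ge by (rule not_inj_part[OF p k card d2 dd1 dd2])
      then show False using bij bij_betw_def by blast
    qed
  next
    assume g1: "gcd (q - 1) (Q + 1) = 1"
    then have p2: "p = 2" and o2: "ord2 (int k) \<le> ord2 (int l)" using gc by auto
    have Dv: "\<forall>i. (2::nat)^i dvd k \<longrightarrow> 2^i dvd l" using o2 ord2_le_iff[OF k] by simp
    obtain m b where mb: "odd m" "l * m = 3 * k * b" using odd_mult_exists[OF k Dv] by blast
    have ch2: "CHAR('a) = 2" using ff_CHAR[OF p card] p2 by simp
    have hQm: "z ^ (2^(l*m)) = z" for z :: 'a
    proof -
      have "(2::nat)^(l*m) = card (UNIV :: 'a set) ^ b" by (simp add: mb(2) card p2 power_mult)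
      then show ?thesis by (simp add: ff_power_card_pow)
    qed
    have neg: "- a = a" for a :: 'a by (rule char2_neg[OF ch2])
    have inj: "inj_on f \<Gamma>"
    proof (rule inj_onI)
      fix x y assume xG: "x \<in> \<Gamma>" and yG: "y \<in> \<Gamma>" and fxy: "f x = f y"
      have tx: "x ^ ((2^k)^2) = x + x ^ (2^k)"
      proof -
        have "x ^ (q^2) + x ^ q + x = 0" using xG by (simp add: \<Gamma>_def)
        then have "x ^ (q^2) = - (x ^ q + x)" by (metis add.assoc eq_neg_iff_add_eq_0)
        then show ?thesis using neg[of "x ^ q + x"] by (simp add: q_def p2 add.commute)
      qed
      have ty: "y ^ ((2^k)^2) = y + y ^ (2^k)"
      proof -
        have "y ^ (q^2) + y ^ q + y = 0" using yG by (simp add: \<Gamma>_def)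
        then have "y ^ (q^2) = - (y ^ q + y)" by (metis add.assoc eq_neg_iff_add_eq_0)
        then show ?thesis using neg[of "y ^ q + y"] by (simp add: q_def p2 add.commute)
      qed
      define u where "u = x ^ (2^l + 1)"
      define w where "w = y ^ (2^l + 1)"
      have "u ^ q - u = w ^ q - w" using fxy by (simp add: fpow u_def w_def Q_def p2)
      then have e: "u ^ q - w ^ q = u - w" by (simp add: algebra_simps)
      have "(u - w) ^ (2^k) = u ^ (2^k) - w ^ (2^k)" by (rule frob_diff[OF ch2]) simp
      then have "(u - w) ^ (2^k) = u - w" using e by (simp add: q_def p2)
      moreover have "u - w = u + w" by (subst diff_conv_add_uminus, subst neg) (rule refl)
      ultimately have hc: "(u + w) ^ (2^k) = u + w" by simp
      show "x = y" by (rule char2_core[OF ch2 mb(1) hQm tx ty]) (use hc in \<open>simp add: u_def w_def\<close>)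
    qed
    have "finite \<Gamma>" by simp
    then have "f ` \<Gamma> = \<Gamma>" using into inj by (rule endo_inj_surj)
    then show "bij_betw f \<Gamma> \<Gamma>" using inj by (simp add: bij_betw_def)
  qed
  show ?thesis using bij_iff gc unfolding f_def by simp
qed

end
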